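(* Let $d\ge 3$, let $\mathcal{H}_A=\mathcal{H}_B=\mathbb{C}^d$ with fixed orthonormal bases $|1\rangle,\dots,|d\rangle$, and $\mathcal{H}=\mathcal{H}_A\otimes\mathcal{H}_B$. The following are equivalent: (i) none of the Werner states $\rho_W(t)=1-tF$ with $t\in(1/d,1/2]$ is $2$-distillable; (ii) the function $$\Phi(x_1,\dots,x_d,y_1,\dots,y_d,u_1,\dots,u_d,v_1,\dots,v_d)=\langle\psi|\,\sigma_W^{\otimes 2}\,|\psi\rangle,\qquad |\psi\rangle=\sum_{i,j=1}^d|i,j,x_i,u_j\rangle+\sum_{i,j=1}^d|i,j,y_i,v_j\rangle,$$ is nonnegative for all vectors $x_i,y_i\in\mathcal{H}_A$ and $u_i,v_i\in\mathcal{H}_B$ ($i=1,\dots,d$), where $\sigma_W=1-\tfrac{d}{2}P$.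
   Context: The flip operator is $F=\sum_{i,j}|i,j\rangle\langle j,i|$ on $\mathcal{H}$, and $P=\frac1d\sum_{i,j}|i,i\rangle\langle j,j|$ is the projector onto the maximally entangled state; $dP$ is the partial transpose $1\otimes T(F)$, so the partial transpose of $\rho_W(t)$ is $1-tdP$. In $|i,j,x_i,u_j\rangle$ the four tensor factors are, in order, Alice's first copy $\mathcal{H}_A$, Bob's first copy $\mathcal{H}_B$, Alice's second copy $\mathcal{H}_A$, Bob's second copy $\mathcal{H}_B$; thus $\sigma_W^{\otimes 2}$ acts on $\mathcal{H}\otimes\mathcal{H}$ with the first $\sigma_W$ on the first two factors and the second on the last two. A bipartite state $\rho$ on $\mathcal{H}$ is called $k$-distillable if there exists a (non-normalized) vector $|\psi\rangle\in\mathcal{H}^{\otimes k}$, regarded as a bipartite vector in $\mathcal{H}_A^{\otimes k}\otimes\mathcal{H}_B^{\otimes k}$, of Schmidt rank at most two such that $\langle\psi|\sigma^{\otimes k}|\psi\rangle<0$, where $\sigma=1\otimes T(\rho)$ is the partial transpose of $\rho$. *)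

theory Defs
  imports Complex_Main "HOL-Library.Complex_Order" "HOL-Library.Cardinality"
begin

text \<open>The local Hilbert spaces H_A = H_B = C^d have orthonormal basis indexed by the
finite type 'n, d = CARD('n).  A vector of H = H_A (x) H_B is a function 'n \<times> 'n \<Rightarrow> complex,
an operator on H is its matrix  ('n \<times> 'n) \<Rightarrow> ('n \<times> 'n) \<Rightarrow> complex  in the product basis.\<close>

type_synonym 'n op = "('n \<times> 'n) \<Rightarrow> ('n \<times> 'n) \<Rightarrow> complex"

definition id_op :: "'n op" where
  "id_op p q = (if p = q then 1 else 0)"

definition flip :: "'n op" where
  "flip p q = (if fst p = snd q \<and> snd p = fst q then 1 else 0)"

definition max_ent_proj :: "'n::finite op" where
  "max_ent_proj p q = (if fst p = snd p \<and> fst q = snd q then 1 / of_nat CARD('n) else 0)"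

definition partial_transpose :: "'n op \<Rightarrow> 'n op" where
  "partial_transpose \<rho> p q = \<rho> (fst p, snd q) (fst q, snd p)"

definition werner :: "real \<Rightarrow> 'n op" where
  "werner t p q = id_op p q - complex_of_real t * flip p q"

definition sigma_W :: "'n::finite op" where
  "sigma_W p q = id_op p q - (of_nat CARD('n) / 2) * max_ent_proj p q"

text \<open>Vectors of H^{(x) k}, regarded as bipartite vectors of H_A^{(x) k} (x) H_B^{(x) k}:
functions psi a b where a (Alice's indices) and b (Bob's indices) are lists of length k;
the coordinate psi a b is the coefficient of |a_1,b_1,...,a_k,b_k>.\<close>

definition idx :: "nat \<Rightarrow> 'n list set" where
  "idx k = {a. length a = k}"

definition tensor_power_form :: "nat \<Rightarrow> 'n op \<Rightarrow> ('n list \<Rightarrow> 'n list \<Rightarrow> complex) \<Rightarrow> complex" where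
  "tensor_power_form k \<sigma> \<psi> =
     (\<Sum>a\<in>idx k. \<Sum>b\<in>idx k. \<Sum>a'\<in>idx k. \<Sum>b'\<in>idx k.
        cnj (\<psi> a b) * (\<Prod>i<k. \<sigma> (a ! i, b ! i) (a' ! i, b' ! i)) * \<psi> a' b')"

definition schmidt_rank_le2 :: "nat \<Rightarrow> ('n list \<Rightarrow> 'n list \<Rightarrow> complex) \<Rightarrow> bool" where
  "schmidt_rank_le2 k \<psi> \<longleftrightarrow>
     (\<exists>\<alpha>1 \<beta>1 \<alpha>2 \<beta>2 :: 'n list \<Rightarrow> complex.
        \<forall>a\<in>idx k. \<forall>b\<in>idx k. \<psi> a b = \<alpha>1 a * \<beta>1 b + \<alpha>2 a * \<beta>2 b)"

definition k_distillable :: "nat \<Rightarrow> 'n::finite op \<Rightarrow> bool" where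
  "k_distillable k \<rho> \<longleftrightarrow>
     (\<exists>\<psi>. schmidt_rank_le2 k \<psi> \<and> tensor_power_form k (partial_transpose \<rho>) \<psi> < 0)"

text \<open>Phi = <psi| sigma_W^{(x) 2} |psi> with
psi = sum_{i,j} |i,j,x_i,u_j> + sum_{i,j} |i,j,y_i,v_j>; factors A1,B1,A2,B2.\<close>
definition Phi :: "('n::finite \<Rightarrow> 'n \<Rightarrow> complex) \<Rightarrow> ('n \<Rightarrow> 'n \<Rightarrow> complex) \<Rightarrow>
                   ('n \<Rightarrow> 'n \<Rightarrow> complex) \<Rightarrow> ('n \<Rightarrow> 'n \<Rightarrow> complex) \<Rightarrow> complex" where
  "Phi x y u v =
     (let \<psi> = (\<lambda>p q r s. x p r * u q s + y p r * v q s) in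
      (\<Sum>p\<in>UNIV. \<Sum>q\<in>UNIV. \<Sum>r\<in>UNIV. \<Sum>s\<in>UNIV.
       \<Sum>p'\<in>UNIV. \<Sum>q'\<in>UNIV. \<Sum>r'\<in>UNIV. \<Sum>s'\<in>UNIV.
         cnj (\<psi> p q r s) * sigma_W (p, q) (p', q') * sigma_W (r, s) (r', s') * \<psi> p' q' r' s'))"

end

theory Submission
  imports Defs "HOL-Analysis.L2_Norm"
begin


lemma cs_complex:
  fixes a b :: "'n::finite \<Rightarrow> complex"
  shows "(cmod (\<Sum>i\<in>UNIV. a i * b i))\<^sup>2 \<le> (\<Sum>i\<in>UNIV. (cmod (a i))\<^sup>2) * (\<Sum>i\<in>UNIV. (cmod (b i))\<^sup>2)"
proof -
  have "cmod (\<Sum>i\<in>UNIV. a i * b i) \<le> (\<Sum>i\<in>UNIV. cmod (a i * b i))"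
    by (rule norm_sum)
  also have "\<dots> = (\<Sum>i\<in>UNIV. \<bar>cmod (a i)\<bar> * \<bar>cmod (b i)\<bar>)" by (simp add: norm_mult)
  also have "\<dots> \<le> L2_set (\<lambda>i. cmod (a i)) UNIV * L2_set (\<lambda>i. cmod (b i)) UNIV"
    by (rule L2_set_mult_ineq)
  finally have h: "cmod (\<Sum>i\<in>UNIV. a i * b i) \<le> L2_set (\<lambda>i. cmod (a i)) UNIV * L2_set (\<lambda>i. cmod (b i)) UNIV" .
  have "(cmod (\<Sum>i\<in>UNIV. a i * b i))\<^sup>2 \<le> (L2_set (\<lambda>i. cmod (a i)) UNIV * L2_set (\<lambda>i. cmod (b i)) UNIV)\<^sup>2"
    using h by (simp add: power_mono)
  also have "\<dots> = (\<Sum>i\<in>UNIV. (cmod (a i))\<^sup>2) * (\<Sum>i\<in>UNIV. (cmod (b i))\<^sup>2)"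
    by (simp add: L2_set_def power_mult_distrib sum_nonneg)
  finally show ?thesis .
qed

lemma cmod_sq_cnj: "complex_of_real ((cmod z)\<^sup>2) = cnj z * z"
  by (metis complex_norm_square mult.commute)

lemma rank2_orth:
  fixes a b c e :: "'n::finite \<Rightarrow> complex"
  assumes orth: "(\<Sum>i\<in>UNIV. cnj (a i) * c i) = 0"
  shows "(cmod (\<Sum>i\<in>UNIV. a i * b i + c i * e i))\<^sup>2
         \<le> 2 * (\<Sum>p\<in>UNIV. \<Sum>q\<in>UNIV. (cmod (a p * b q + c p * e q))\<^sup>2)"
proof -
  define na where "na = (\<Sum>i\<in>UNIV. (cmod (a i))\<^sup>2)"
  define nb where "nb = (\<Sum>i\<in>UNIV. (cmod (b i))\<^sup>2)"
  define nc where "nc = (\<Sum>i\<in>UNIV. (cmod (c i))\<^sup>2)"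
  define ne where "ne = (\<Sum>i\<in>UNIV. (cmod (e i))\<^sup>2)"
  have orth2: "(\<Sum>i\<in>UNIV. cnj (c i) * a i) = 0"
  proof -
    have "(\<Sum>i\<in>UNIV. cnj (c i) * a i) = cnj (\<Sum>i\<in>UNIV. cnj (a i) * c i)"
      by (simp add: mult.commute)
    thus ?thesis using orth by simp
  qed
  have "complex_of_real (\<Sum>p\<in>UNIV. \<Sum>q\<in>UNIV. (cmod (a p * b q + c p * e q))\<^sup>2)
      = (\<Sum>p\<in>UNIV. \<Sum>q\<in>UNIV. (cnj (a p) * a p) * (cnj (b q) * b q) + (cnj (c p) * c p) * (cnj (e q) * e q)
            + (cnj (a p) * c p) * (cnj (b q) * e q) + (cnj (c p) * a p) * (cnj (e q) * b q))"
    by (simp only: of_real_sum cmod_sq_cnj) (simp add: algebra_simps)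
  also have "\<dots> = (\<Sum>p\<in>UNIV. cnj (a p) * a p) * (\<Sum>q\<in>UNIV. cnj (b q) * b q)
      + (\<Sum>p\<in>UNIV. cnj (c p) * c p) * (\<Sum>q\<in>UNIV. cnj (e q) * e q)
      + (\<Sum>p\<in>UNIV. cnj (a p) * c p) * (\<Sum>q\<in>UNIV. cnj (b q) * e q)
      + (\<Sum>p\<in>UNIV. cnj (c p) * a p) * (\<Sum>q\<in>UNIV. cnj (e q) * b q)"
    by (simp add: sum.distrib sum_product)
  also have "\<dots> = complex_of_real (na * nb + nc * ne)"
    unfolding na_def nb_def nc_def ne_def
    by (simp only: of_real_add of_real_mult of_real_sum cmod_sq_cnj orth orth2) simp
  finally have N: "(\<Sum>p\<in>UNIV. \<Sum>q\<in>UNIV. (cmod (a p * b q + c p * e q))\<^sup>2) = na * nb + nc * ne"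
    using of_real_eq_iff by blast
  have "(cmod (\<Sum>i\<in>UNIV. a i * b i + c i * e i))\<^sup>2
      = (cmod ((\<Sum>i\<in>UNIV. a i * b i) + (\<Sum>i\<in>UNIV. c i * e i)))\<^sup>2"
    by (simp add: sum.distrib)
  also have "\<dots> \<le> (cmod (\<Sum>i\<in>UNIV. a i * b i) + cmod (\<Sum>i\<in>UNIV. c i * e i))\<^sup>2"
    by (rule power_mono[OF norm_triangle_ineq]) simp
  also have "\<dots> \<le> 2 * (cmod (\<Sum>i\<in>UNIV. a i * b i))\<^sup>2 + 2 * (cmod (\<Sum>i\<in>UNIV. c i * e i))\<^sup>2"
    by (smt (verit) sum_squares_bound power2_sum)
  also have "\<dots> \<le> 2 * (na * nb) + 2 * (nc * ne)"
    using cs_complex[of a b] cs_complex[of c e] unfolding na_def nb_def nc_def ne_def by linarith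
  finally show ?thesis using N by simp
qed

lemma rank2:
  fixes a b c e :: "'n::finite \<Rightarrow> complex"
  shows "(cmod (\<Sum>i\<in>UNIV. a i * b i + c i * e i))\<^sup>2
         \<le> 2 * (\<Sum>p\<in>UNIV. \<Sum>q\<in>UNIV. (cmod (a p * b q + c p * e q))\<^sup>2)"
proof (cases "\<forall>i. a i = 0")
  case True
  then have "(\<Sum>i\<in>UNIV. cnj (a i) * c i) = 0" by simp
  then show ?thesis by (rule rank2_orth)
next
  case False
  then obtain i0 where i0: "a i0 \<noteq> 0" by blast
  define na where "na = (\<Sum>i\<in>UNIV. (cmod (a i))\<^sup>2)"
  have "(cmod (a i0))\<^sup>2 \<le> na" unfolding na_def
    by (rule member_le_sum) auto
  moreover have "(cmod (a i0))\<^sup>2 > 0" using i0 by simp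
  ultimately have napos: "na > 0" by linarith
  have naC: "complex_of_real na = (\<Sum>i\<in>UNIV. cnj (a i) * a i)"
    unfolding na_def by (simp only: of_real_sum cmod_sq_cnj)
  define \<mu> where "\<mu> = (\<Sum>i\<in>UNIV. cnj (a i) * c i) / complex_of_real na"
  define c' where "c' i = c i - \<mu> * a i" for i
  define b' where "b' q = b q + \<mu> * e q" for q
  have "(\<Sum>i\<in>UNIV. cnj (a i) * c' i) = (\<Sum>i\<in>UNIV. cnj (a i) * c i) - \<mu> * (\<Sum>i\<in>UNIV. cnj (a i) * a i)"
    unfolding c'_def by (simp add: algebra_simps sum.distrib sum_subtractf sum_distrib_left)
  also have "\<dots> = 0" unfolding \<mu>_def naC[symmetric] using napos by simp
  finally have orth: "(\<Sum>i\<in>UNIV. cnj (a i) * c' i) = 0" .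
  have pw: "a p * b' q + c' p * e q = a p * b q + c p * e q" for p q
    unfolding b'_def c'_def by (simp add: algebra_simps)
  show ?thesis using rank2_orth[OF orth, of b' e] by (simp only: pw)
qed



definition Emat :: "'n op" where "Emat p q = (if fst p = snd p \<and> fst q = snd q then 1 else 0)"

lemma id_op_pair: "id_op (p,q) (p',q') = (if p = p' then 1 else 0) * (if q = q' then 1 else 0)"
  by (simp add: id_op_def)
lemma Emat_pair: "Emat (p,q) (p',q') = (if p = q then 1 else 0) * (if p' = q' then 1 else 0)"
  by (simp add: Emat_def)

lemma sum_if_const: "(\<Sum>x\<in>A. if P then f x else 0) = (if P then (\<Sum>x\<in>A. f x) else 0)"
  by simp

lemma S_II: fixes \<psi> :: "'n::finite \<Rightarrow> 'n \<Rightarrow> 'n \<Rightarrow> 'n \<Rightarrow> complex"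
  shows "(\<Sum>p'\<in>UNIV. \<Sum>q'\<in>UNIV. \<Sum>r'\<in>UNIV. \<Sum>s'\<in>UNIV. id_op (p,q) (p',q') * id_op (r,s) (r',s') * \<psi> p' q' r' s') = \<psi> p q r s"
  by (simp add: id_op_pair if_distrib[where f="\<lambda>x. x * _"] sum.delta sum.delta' sum_if_const cong: if_cong)

lemma S_EI: fixes \<psi> :: "'n::finite \<Rightarrow> 'n \<Rightarrow> 'n \<Rightarrow> 'n \<Rightarrow> complex"
  shows "(\<Sum>p'\<in>UNIV. \<Sum>q'\<in>UNIV. \<Sum>r'\<in>UNIV. \<Sum>s'\<in>UNIV. Emat (p,q) (p',q') * id_op (r,s) (r',s') * \<psi> p' q' r' s') = (if p = q then (\<Sum>i\<in>UNIV. \<psi> i i r s) else 0)"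
  by (simp add: id_op_pair Emat_pair if_distrib[where f="\<lambda>x. x * _"] sum.delta sum.delta' sum_if_const cong: if_cong)

lemma S_IE: fixes \<psi> :: "'n::finite \<Rightarrow> 'n \<Rightarrow> 'n \<Rightarrow> 'n \<Rightarrow> complex"
  shows "(\<Sum>p'\<in>UNIV. \<Sum>q'\<in>UNIV. \<Sum>r'\<in>UNIV. \<Sum>s'\<in>UNIV. id_op (p,q) (p',q') * Emat (r,s) (r',s') * \<psi> p' q' r' s') = (if r = s then (\<Sum>j\<in>UNIV. \<psi> p q j j) else 0)"
  by (simp add: id_op_pair Emat_pair if_distrib[where f="\<lambda>x. x * _"] sum.delta sum.delta' sum_if_const cong: if_cong)

lemma S_EE: fixes \<psi> :: "'n::finite \<Rightarrow> 'n \<Rightarrow> 'n \<Rightarrow> 'n \<Rightarrow> complex"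
  shows "(\<Sum>p'\<in>UNIV. \<Sum>q'\<in>UNIV. \<Sum>r'\<in>UNIV. \<Sum>s'\<in>UNIV. Emat (p,q) (p',q') * Emat (r,s) (r',s') * \<psi> p' q' r' s') = (if p = q \<and> r = s then (\<Sum>i\<in>UNIV. \<Sum>j\<in>UNIV. \<psi> i i j j) else 0)"
  by (simp add: id_op_pair Emat_pair if_distrib[where f="\<lambda>x. x * _"] sum.delta sum.delta' sum_if_const cong: if_cong)


lemma if_and0: "(if A \<and> B then x else 0) = (if A then (if B then x else 0) else 0)" by simp


definition Sop :: "real \<Rightarrow> 'n op" where
  "Sop c p q = id_op p q - complex_of_real c * Emat p q"

definition Q4 :: "'n::finite op \<Rightarrow> ('n \<Rightarrow> 'n \<Rightarrow> 'n \<Rightarrow> 'n \<Rightarrow> complex) \<Rightarrow> complex" where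
  "Q4 \<sigma> \<psi> = (\<Sum>p\<in>UNIV. \<Sum>q\<in>UNIV. \<Sum>r\<in>UNIV. \<Sum>s\<in>UNIV.
       \<Sum>p'\<in>UNIV. \<Sum>q'\<in>UNIV. \<Sum>r'\<in>UNIV. \<Sum>s'\<in>UNIV.
         cnj (\<psi> p q r s) * \<sigma> (p, q) (p', q') * \<sigma> (r, s) (r', s') * \<psi> p' q' r' s')"

lemma op_apply: fixes \<psi> :: "'n::finite \<Rightarrow> 'n \<Rightarrow> 'n \<Rightarrow> 'n \<Rightarrow> complex"
  shows "(\<Sum>p'\<in>UNIV. \<Sum>q'\<in>UNIV. \<Sum>r'\<in>UNIV. \<Sum>s'\<in>UNIV. Sop c (p,q) (p',q') * Sop c (r,s) (r',s') * \<psi> p' q' r' s')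
   = \<psi> p q r s - of_real c * (if p = q then (\<Sum>i\<in>UNIV. \<psi> i i r s) else 0)
      - of_real c * (if r = s then (\<Sum>j\<in>UNIV. \<psi> p q j j) else 0)
      + (of_real c)\<^sup>2 * (if p = q \<and> r = s then (\<Sum>i\<in>UNIV. \<Sum>j\<in>UNIV. \<psi> i i j j) else 0)"
proof -
  have pw: "Sop c (p,q) (p',q') * Sop c (r,s) (r',s') * \<psi> p' q' r' s'
     = id_op (p,q) (p',q') * id_op (r,s) (r',s') * \<psi> p' q' r' s'
       - of_real c * (Emat (p,q) (p',q') * id_op (r,s) (r',s') * \<psi> p' q' r' s')
       - of_real c * (id_op (p,q) (p',q') * Emat (r,s) (r',s') * \<psi> p' q' r' s')
       + (of_real c)\<^sup>2 * (Emat (p,q) (p',q') * Emat (r,s) (r',s') * \<psi> p' q' r' s')" for p' q' r' s'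
    by (simp add: Sop_def algebra_simps power2_eq_square)
  show ?thesis
    by (simp only: pw sum.distrib sum_subtractf sum_distrib_left[symmetric] S_II S_EI S_IE S_EE)
qed

lemma T1: fixes \<psi> :: "'n::finite \<Rightarrow> 'n \<Rightarrow> 'n \<Rightarrow> 'n \<Rightarrow> complex"
  shows "(\<Sum>p\<in>UNIV. \<Sum>q\<in>UNIV. \<Sum>r\<in>UNIV. \<Sum>s\<in>UNIV. cnj (\<psi> p q r s) * (if p = q then (\<Sum>i\<in>UNIV. \<psi> i i r s) else 0))
     = complex_of_real (\<Sum>r\<in>UNIV. \<Sum>s\<in>UNIV. (cmod (\<Sum>i\<in>UNIV. \<psi> i i r s))\<^sup>2)"
proof -
  have "(\<Sum>p\<in>UNIV. \<Sum>q\<in>UNIV. \<Sum>r\<in>UNIV. \<Sum>s\<in>UNIV. cnj (\<psi> p q r s) * (if p = q then (\<Sum>i\<in>UNIV. \<psi> i i r s) else 0))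
     = (\<Sum>p\<in>UNIV. \<Sum>r\<in>UNIV. \<Sum>s\<in>UNIV. cnj (\<psi> p p r s) * (\<Sum>i\<in>UNIV. \<psi> i i r s))"
    by (simp add: if_distrib[where f="\<lambda>x. _ * x"] sum.delta sum.delta' sum_if_const cong: if_cong)
  also have "\<dots> = (\<Sum>r\<in>UNIV. \<Sum>p\<in>UNIV. \<Sum>s\<in>UNIV. cnj (\<psi> p p r s) * (\<Sum>i\<in>UNIV. \<psi> i i r s))"
    by (rule sum.swap)
  also have "\<dots> = (\<Sum>r\<in>UNIV. \<Sum>s\<in>UNIV. \<Sum>p\<in>UNIV. cnj (\<psi> p p r s) * (\<Sum>i\<in>UNIV. \<psi> i i r s))"
    by (rule sum.cong[OF refl], rule sum.swap)
  also have "\<dots> = (\<Sum>r\<in>UNIV. \<Sum>s\<in>UNIV. cnj (\<Sum>i\<in>UNIV. \<psi> i i r s) * (\<Sum>i\<in>UNIV. \<psi> i i r s))"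
    by (simp add: sum_distrib_right)
  finally show ?thesis by (simp only: of_real_sum cmod_sq_cnj)
qed

lemma T2: fixes \<psi> :: "'n::finite \<Rightarrow> 'n \<Rightarrow> 'n \<Rightarrow> 'n \<Rightarrow> complex"
  shows "(\<Sum>p\<in>UNIV. \<Sum>q\<in>UNIV. \<Sum>r\<in>UNIV. \<Sum>s\<in>UNIV. cnj (\<psi> p q r s) * (if r = s then (\<Sum>j\<in>UNIV. \<psi> p q j j) else 0))
     = complex_of_real (\<Sum>p\<in>UNIV. \<Sum>q\<in>UNIV. (cmod (\<Sum>j\<in>UNIV. \<psi> p q j j))\<^sup>2)"
proof -
  have "(\<Sum>p\<in>UNIV. \<Sum>q\<in>UNIV. \<Sum>r\<in>UNIV. \<Sum>s\<in>UNIV. cnj (\<psi> p q r s) * (if r = s then (\<Sum>j\<in>UNIV. \<psi> p q j j) else 0))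
     = (\<Sum>p\<in>UNIV. \<Sum>q\<in>UNIV. cnj (\<Sum>j\<in>UNIV. \<psi> p q j j) * (\<Sum>j\<in>UNIV. \<psi> p q j j))"
    by (simp add: if_distrib[where f="\<lambda>x. _ * x"] sum.delta sum.delta' sum_if_const sum_distrib_right cong: if_cong)
  then show ?thesis by (simp only: of_real_sum cmod_sq_cnj)
qed

lemma T3: fixes \<psi> :: "'n::finite \<Rightarrow> 'n \<Rightarrow> 'n \<Rightarrow> 'n \<Rightarrow> complex"
  shows "(\<Sum>p\<in>UNIV. \<Sum>q\<in>UNIV. \<Sum>r\<in>UNIV. \<Sum>s\<in>UNIV. cnj (\<psi> p q r s) * (if p = q \<and> r = s then (\<Sum>i\<in>UNIV. \<Sum>j\<in>UNIV. \<psi> i i j j) else 0))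
     = complex_of_real ((cmod (\<Sum>i\<in>UNIV. \<Sum>j\<in>UNIV. \<psi> i i j j))\<^sup>2)"
proof -
  have "(\<Sum>p\<in>UNIV. \<Sum>q\<in>UNIV. \<Sum>r\<in>UNIV. \<Sum>s\<in>UNIV. cnj (\<psi> p q r s) * (if p = q \<and> r = s then (\<Sum>i\<in>UNIV. \<Sum>j\<in>UNIV. \<psi> i i j j) else 0))
     = cnj (\<Sum>i\<in>UNIV. \<Sum>j\<in>UNIV. \<psi> i i j j) * (\<Sum>i\<in>UNIV. \<Sum>j\<in>UNIV. \<psi> i i j j)"
    unfolding if_and0 by (simp add: if_distrib[where f="\<lambda>x. _ * x"] sum.delta sum.delta' sum_if_const sum_distrib_right cong: if_cong)
  then show ?thesis by (simp only: cmod_sq_cnj)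
qed

definition NN :: "('n::finite \<Rightarrow> 'n \<Rightarrow> 'n \<Rightarrow> 'n \<Rightarrow> complex) \<Rightarrow> real" where
  "NN \<psi> = (\<Sum>p\<in>UNIV. \<Sum>q\<in>UNIV. \<Sum>r\<in>UNIV. \<Sum>s\<in>UNIV. (cmod (\<psi> p q r s))\<^sup>2)"
definition AA1 :: "('n::finite \<Rightarrow> 'n \<Rightarrow> 'n \<Rightarrow> 'n \<Rightarrow> complex) \<Rightarrow> real" where
  "AA1 \<psi> = (\<Sum>r\<in>UNIV. \<Sum>s\<in>UNIV. (cmod (\<Sum>i\<in>UNIV. \<psi> i i r s))\<^sup>2)"
definition AA2 :: "('n::finite \<Rightarrow> 'n \<Rightarrow> 'n \<Rightarrow> 'n \<Rightarrow> complex) \<Rightarrow> real" where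
  "AA2 \<psi> = (\<Sum>p\<in>UNIV. \<Sum>q\<in>UNIV. (cmod (\<Sum>j\<in>UNIV. \<psi> p q j j))\<^sup>2)"
definition CC :: "('n::finite \<Rightarrow> 'n \<Rightarrow> 'n \<Rightarrow> 'n \<Rightarrow> complex) \<Rightarrow> real" where
  "CC \<psi> = (cmod (\<Sum>i\<in>UNIV. \<Sum>j\<in>UNIV. \<psi> i i j j))\<^sup>2"

lemma Q4_Sop: "Q4 (Sop c) \<psi> = complex_of_real (NN \<psi> - c * (AA1 \<psi> + AA2 \<psi>) + c\<^sup>2 * CC \<psi>)"
proof -
  have "Q4 (Sop c) \<psi> = (\<Sum>p\<in>UNIV. \<Sum>q\<in>UNIV. \<Sum>r\<in>UNIV. \<Sum>s\<in>UNIV. cnj (\<psi> p q r s) *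
     (\<Sum>p'\<in>UNIV. \<Sum>q'\<in>UNIV. \<Sum>r'\<in>UNIV. \<Sum>s'\<in>UNIV. Sop c (p,q) (p',q') * Sop c (r,s) (r',s') * \<psi> p' q' r' s'))"
    unfolding Q4_def by (simp add: sum_distrib_left mult.assoc)
  also have "\<dots> = (\<Sum>p\<in>UNIV. \<Sum>q\<in>UNIV. \<Sum>r\<in>UNIV. \<Sum>s\<in>UNIV. cnj (\<psi> p q r s) * \<psi> p q r s
      - of_real c * (cnj (\<psi> p q r s) * (if p = q then (\<Sum>i\<in>UNIV. \<psi> i i r s) else 0))
      - of_real c * (cnj (\<psi> p q r s) * (if r = s then (\<Sum>j\<in>UNIV. \<psi> p q j j) else 0))
      + (of_real c)\<^sup>2 * (cnj (\<psi> p q r s) * (if p = q \<and> r = s then (\<Sum>i\<in>UNIV. \<Sum>j\<in>UNIV. \<psi> i i j j) else 0)))"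
    by (simp only: op_apply) (simp only: algebra_simps)
  also have "\<dots> = complex_of_real (NN \<psi>) - of_real c * complex_of_real (AA1 \<psi>) - of_real c * complex_of_real (AA2 \<psi>)
       + (of_real c)\<^sup>2 * complex_of_real (CC \<psi>)"
    unfolding NN_def AA1_def AA2_def CC_def
    by (simp only: sum.distrib sum_subtractf sum_distrib_left[symmetric] T1 T2 T3 of_real_sum cmod_sq_cnj)
  finally show ?thesis by (simp add: algebra_simps)
qed



lemma cplx_real_le: "(0 \<le> complex_of_real f) \<longleftrightarrow> 0 \<le> f"
  by (simp add: less_eq_complex_def)
lemma cplx_real_less: "(complex_of_real f < 0) \<longleftrightarrow> f < 0"
  by (simp add: less_complex_def)

lemma PT_werner: "partial_transpose (werner t) = Sop t"
  by (auto simp: fun_eq_iff partial_transpose_def werner_def Sop_def id_op_def flip_def Emat_def prod_eq_iff)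

lemma sigmaW_Sop: "sigma_W = (Sop (1/2) :: 'n::finite op)"
proof -
  have "CARD('n) > 0" by simp
  then show ?thesis
    by (auto simp: fun_eq_iff sigma_W_def Sop_def max_ent_proj_def Emat_def)
qed

lemma sum_idx2: "(\<Sum>a\<in>idx 2. f a) = (\<Sum>p\<in>UNIV. \<Sum>r\<in>UNIV. f [p,r])"
proof -
  have e: "idx 2 = (\<lambda>(p,r). [p,r]) ` (UNIV \<times> UNIV)"
    by (auto simp: idx_def length_Suc_conv numeral_2_eq_2 image_iff)
  have inj: "inj_on (\<lambda>(p,r). [p,r]) (UNIV \<times> UNIV)" by (auto simp: inj_on_def)
  have "(\<Sum>a\<in>idx 2. f a) = sum (f \<circ> (\<lambda>(p,r). [p,r])) (UNIV \<times> UNIV)"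
    unfolding e by (rule sum.reindex[OF inj])
  also have "\<dots> = (\<Sum>(p,r)\<in>UNIV \<times> UNIV. f [p,r])"
    by (rule sum.cong) auto
  also have "\<dots> = (\<Sum>p\<in>UNIV. \<Sum>r\<in>UNIV. f [p,r])"
    by (rule sum.cartesian_product[symmetric])
  finally show ?thesis .
qed

lemma sum_idx2_2: "(\<Sum>a\<in>idx 2. \<Sum>b\<in>idx 2. g a b) = (\<Sum>p\<in>UNIV. \<Sum>q\<in>UNIV. \<Sum>r\<in>UNIV. \<Sum>s\<in>UNIV. g [p,r] [q,s])"
  by (simp add: sum_idx2) (rule sum.cong[OF refl], rule sum.swap)

lemma TPF_Q4: "tensor_power_form 2 \<sigma> \<psi> = Q4 \<sigma> (\<lambda>p q r s. \<psi> [p,r] [q,s])"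
  unfolding tensor_power_form_def Q4_def
  by (simp only: sum_idx2_2) (simp add: numeral_2_eq_2 lessThan_Suc mult_ac)

lemma Phi_Q4: "Phi x y u v = Q4 sigma_W (\<lambda>p q r s. x p r * u q s + y p r * v q s)"
  by (simp add: Phi_def Q4_def Let_def)

lemma swap4: fixes f :: "'a \<Rightarrow> 'b \<Rightarrow> 'c \<Rightarrow> 'd \<Rightarrow> real"
  shows "(\<Sum>r\<in>A. \<Sum>s\<in>B. \<Sum>p\<in>C. \<Sum>q\<in>D. f p q r s) = (\<Sum>p\<in>C. \<Sum>q\<in>D. \<Sum>r\<in>A. \<Sum>s\<in>B. f p q r s)"
proof -
  have "(\<Sum>r\<in>A. \<Sum>s\<in>B. \<Sum>p\<in>C. \<Sum>q\<in>D. f p q r s) = (\<Sum>r\<in>A. \<Sum>p\<in>C. \<Sum>s\<in>B. \<Sum>q\<in>D. f p q r s)"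
    by (rule sum.cong[OF refl], rule sum.swap)
  also have "\<dots> = (\<Sum>p\<in>C. \<Sum>r\<in>A. \<Sum>s\<in>B. \<Sum>q\<in>D. f p q r s)" by (rule sum.swap)
  also have "\<dots> = (\<Sum>p\<in>C. \<Sum>r\<in>A. \<Sum>q\<in>D. \<Sum>s\<in>B. f p q r s)"
    by (rule sum.cong[OF refl], rule sum.cong[OF refl], rule sum.swap)
  also have "\<dots> = (\<Sum>p\<in>C. \<Sum>q\<in>D. \<Sum>r\<in>A. \<Sum>s\<in>B. f p q r s)"
    by (rule sum.cong[OF refl], rule sum.swap)
  finally show ?thesis .
qed

lemma AA1_bound:
  fixes x y u v :: "'n::finite \<Rightarrow> 'n \<Rightarrow> complex"
  shows "AA1 (\<lambda>p q r s. x p r * u q s + y p r * v q s) \<le> 2 * NN (\<lambda>p q r s. x p r * u q s + y p r * v q s)"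
proof -
  have "AA1 (\<lambda>p q r s. x p r * u q s + y p r * v q s)
     \<le> (\<Sum>r\<in>UNIV. \<Sum>s\<in>UNIV. 2 * (\<Sum>p\<in>UNIV. \<Sum>q\<in>UNIV. (cmod (x p r * u q s + y p r * v q s))\<^sup>2))"
    unfolding AA1_def
    by (intro sum_mono) (rule rank2[of "\<lambda>i. x i _" "\<lambda>i. u i _" "\<lambda>i. y i _" "\<lambda>i. v i _"])
  also have "\<dots> = 2 * (\<Sum>r\<in>UNIV. \<Sum>s\<in>UNIV. \<Sum>p\<in>UNIV. \<Sum>q\<in>UNIV. (cmod (x p r * u q s + y p r * v q s))\<^sup>2)"
    by (simp only: sum_distrib_left[symmetric])
  also have "\<dots> = 2 * NN (\<lambda>p q r s. x p r * u q s + y p r * v q s)"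
    unfolding NN_def by (subst swap4) (rule refl)
  finally show ?thesis .
qed

lemma AA2_bound:
  fixes x y u v :: "'n::finite \<Rightarrow> 'n \<Rightarrow> complex"
  shows "AA2 (\<lambda>p q r s. x p r * u q s + y p r * v q s) \<le> 2 * NN (\<lambda>p q r s. x p r * u q s + y p r * v q s)"
proof -
  have "AA2 (\<lambda>p q r s. x p r * u q s + y p r * v q s)
     \<le> (\<Sum>p\<in>UNIV. \<Sum>q\<in>UNIV. 2 * (\<Sum>r\<in>UNIV. \<Sum>s\<in>UNIV. (cmod (x p r * u q s + y p r * v q s))\<^sup>2))"
    unfolding AA2_def
    by (intro sum_mono) (rule rank2[of "\<lambda>i. x _ i" "\<lambda>i. u _ i" "\<lambda>i. y _ i" "\<lambda>i. v _ i"])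
  also have "\<dots> = 2 * NN (\<lambda>p q r s. x p r * u q s + y p r * v q s)"
    unfolding NN_def by (simp only: sum_distrib_left[symmetric])
  finally show ?thesis .
qed

lemma NN_nonneg: "0 \<le> NN \<psi>" unfolding NN_def by (intro sum_nonneg) simp
lemma CC_nonneg: "0 \<le> CC \<psi>" unfolding CC_def by simp

lemma interp:
  fixes N A1 A2 C t :: real
  assumes "0 \<le> N" "A1 \<le> 2 * N" "A2 \<le> 2 * N" "0 \<le> N - (A1 + A2) / 2 + (1/2)\<^sup>2 * C"
    "0 < t" "t \<le> 1/2"
  shows "0 \<le> N - t * (A1 + A2) + t\<^sup>2 * C"
proof -
  define l where "l = 2 * t"
  have l: "0 < l" "l \<le> 1" using assms l_def by auto
  have eq: "N - t * (A1 + A2) + t\<^sup>2 * C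
     = l\<^sup>2 * (N - (A1 + A2) / 2 + (1/2)\<^sup>2 * C) + (1 - l) * ((1 + l) * N - (l / 2) * (A1 + A2))"
    unfolding l_def by (simp add: algebra_simps power2_eq_square)
  have "0 \<le> l\<^sup>2 * (N - (A1 + A2) / 2 + (1/2)\<^sup>2 * C)" using assms(4) by simp
  moreover have "0 \<le> (1 + l) * N - (l / 2) * (A1 + A2)"
  proof -
    have "(l / 2) * (A1 + A2) \<le> (l / 2) * (4 * N)" using assms l by (intro mult_left_mono) auto
    also have "\<dots> \<le> (1 + l) * N"
    proof -
      have "l * N \<le> 1 * N" using l assms(1) by (intro mult_right_mono) auto
      then show ?thesis by (simp add: algebra_simps)
    qed
    finally show ?thesis by simp
  qed
  moreover have "0 \<le> 1 - l" using l by simp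
  ultimately show ?thesis unfolding eq by simp
qed

theorem proposition2p1:
  assumes "CARD('n::finite) \<ge> 3"
  shows "(\<forall>t::real. 1 / real CARD('n) < t \<and> t \<le> 1/2 \<longrightarrow>
            \<not> k_distillable 2 (werner t :: 'n op))
         \<longleftrightarrow> (\<forall>x y u v :: 'n \<Rightarrow> 'n \<Rightarrow> complex. 0 \<le> Phi x y u v)"
proof
  assume H: "\<forall>t::real. 1 / real CARD('n) < t \<and> t \<le> 1/2 \<longrightarrow> \<not> k_distillable 2 (werner t :: 'n op)"
  show "\<forall>x y u v :: 'n \<Rightarrow> 'n \<Rightarrow> complex. 0 \<le> Phi x y u v"
  proof (intro allI)
    fix x y u v :: "'n \<Rightarrow> 'n \<Rightarrow> complex"
    have "1 / real CARD('n) < 1/2" using assms by (simp add: field_simps)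
    with H have nd: "\<not> k_distillable 2 (werner (1/2) :: 'n op)" by auto
    define \<psi> where "\<psi> a b = x (a!0) (a!1) * u (b!0) (b!1) + y (a!0) (a!1) * v (b!0) (b!1)"
      for a b :: "'n list"
    have sr: "schmidt_rank_le2 2 \<psi>"
      unfolding schmidt_rank_le2_def \<psi>_def
      by (rule exI[where x="\<lambda>a. x (a!0) (a!1)"], rule exI[where x="\<lambda>b. u (b!0) (b!1)"],
          rule exI[where x="\<lambda>a. y (a!0) (a!1)"], rule exI[where x="\<lambda>b. v (b!0) (b!1)"]) simp
    define \<Psi> where "\<Psi> = (\<lambda>p q r s. x p r * u q s + y p r * v q s)"
    define F where "F = NN \<Psi> - (1/2) * (AA1 \<Psi> + AA2 \<Psi>) + (1/2)\<^sup>2 * CC \<Psi>"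
    have ps: "(\<lambda>p q r s. \<psi> [p,r] [q,s]) = \<Psi>"
      by (simp add: \<psi>_def \<Psi>_def)
    have eqT: "tensor_power_form 2 (partial_transpose (werner (1/2) :: 'n op)) \<psi> = complex_of_real F"
      unfolding F_def by (simp only: TPF_Q4 PT_werner ps Q4_Sop)
    have eqP: "Phi x y u v = complex_of_real F"
      unfolding F_def by (simp only: Phi_Q4 sigmaW_Sop Q4_Sop \<Psi>_def)
    have "\<not> tensor_power_form 2 (partial_transpose (werner (1/2) :: 'n op)) \<psi> < 0"
      using nd sr unfolding k_distillable_def by blast
    then have "\<not> F < 0" unfolding eqT cplx_real_less .
    then show "0 \<le> Phi x y u v" unfolding eqP cplx_real_le by simp
  qed
next
  assume H: "\<forall>x y u v :: 'n \<Rightarrow> 'n \<Rightarrow> complex. 0 \<le> Phi x y u v"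
  show "\<forall>t::real. 1 / real CARD('n) < t \<and> t \<le> 1/2 \<longrightarrow> \<not> k_distillable 2 (werner t :: 'n op)"
  proof (intro allI impI notI)
    fix t :: real
    assume t: "1 / real CARD('n) < t \<and> t \<le> 1/2"
    assume "k_distillable 2 (werner t :: 'n op)"
    then obtain \<psi> where sr: "schmidt_rank_le2 2 \<psi>"
      and neg: "tensor_power_form 2 (partial_transpose (werner t :: 'n op)) \<psi> < 0"
      unfolding k_distillable_def by blast
    then obtain \<alpha>1 \<beta>1 \<alpha>2 \<beta>2 :: "'n list \<Rightarrow> complex" where
      rep: "\<forall>a\<in>idx 2. \<forall>b\<in>idx 2. \<psi> a b = \<alpha>1 a * \<beta>1 b + \<alpha>2 a * \<beta>2 b"
      unfolding schmidt_rank_le2_def by blast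
    define x where "x p r = \<alpha>1 [p,r]" for p r :: 'n
    define u where "u q s = \<beta>1 [q,s]" for q s :: 'n
    define y where "y p r = \<alpha>2 [p,r]" for p r :: 'n
    define v where "v q s = \<beta>2 [q,s]" for q s :: 'n
    define \<Psi> where "\<Psi> = (\<lambda>p q r s. x p r * u q s + y p r * v q s)"
    have "(\<lambda>p q r s. \<psi> [p,r] [q,s]) = \<Psi>"
      using rep by (auto simp: fun_eq_iff \<Psi>_def x_def u_def y_def v_def idx_def)
    then have e1: "tensor_power_form 2 (partial_transpose (werner t :: 'n op)) \<psi>
        = complex_of_real (NN \<Psi> - t * (AA1 \<Psi> + AA2 \<Psi>) + t\<^sup>2 * CC \<Psi>)"
      by (simp add: TPF_Q4 PT_werner Q4_Sop)
    have "0 \<le> Phi x y u v" using H by blast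
    then have h2: "0 \<le> NN \<Psi> - (1/2) * (AA1 \<Psi> + AA2 \<Psi>) + (1/2)\<^sup>2 * CC \<Psi>"
      unfolding Phi_Q4 sigmaW_Sop Q4_Sop cplx_real_le \<Psi>_def by simp
    have tpos: "0 < t" using t by (smt (verit) divide_nonneg_nonneg of_nat_0_le_iff)
    have "0 \<le> NN \<Psi> - t * (AA1 \<Psi> + AA2 \<Psi>) + t\<^sup>2 * CC \<Psi>"
      apply (rule interp[OF NN_nonneg])
      using AA1_bound AA2_bound h2 tpos t unfolding \<Psi>_def by auto
    moreover have "NN \<Psi> - t * (AA1 \<Psi> + AA2 \<Psi>) + t\<^sup>2 * CC \<Psi> < 0"
      using neg unfolding e1 cplx_real_less .
    ultimately show False by linarith
  qed
qed


end
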